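(* Define $Q(0)=0$, $Q(1)=1$, $Q(n)=b(n)Q(n-1)+Q(n-2)$ for $n\ge2$, where $b(n)=2n/3$ if $3\mid n$ and $b(n)=1$ if $3\nmid n$. For every integer $M>0$, the sequence $(Q(n)\bmod M)_{n\ge0}$ is periodic, with period at most $3M^3$.
   Context: $Q(n)$ is the denominator of the $n$th convergent of the simple continued fraction of $e$. *)

theory Defs
  imports Main
begin

definition b :: "nat \<Rightarrow> nat" where
  "b n = (if 3 dvd n then 2 * n div 3 else 1)"

fun Q :: "nat \<Rightarrow> nat" where
  "Q 0 = 0"
| "Q (Suc 0) = 1"
| "Q (Suc (Suc n)) = b (Suc (Suc n)) * Q (Suc n) + Q n"

end

theory Submission
  imports Defs
begin
declare Q.simps[simp del]
definition q :: "nat \<Rightarrow> nat \<Rightarrow> int" where "q k r = int (Q (3*k+r))"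

lemma r1: "q k 2 = q k 1 + q k 0"
proof -
  have "3*k+2 = Suc (Suc (3*k))" by simp
  then have "Q (3*k+2) = b (Suc (Suc (3*k))) * Q (Suc (3*k)) + Q (3*k)" using Q.simps(3) by metis
  moreover have "b (Suc (Suc (3*k))) = 1" unfolding b_def by presburger
  ultimately show ?thesis unfolding q_def by simp
qed
lemma r2: "q k 3 = 2*(int k+1) * q k 2 + q k 1"
proof -
  have "3*k+3 = Suc (Suc (3*k+1))" "3*k+2 = Suc (3*k+1)" by simp_all
  then have "Q (3*k+3) = b (3*k+3) * Q (3*k+2) + Q (3*k+1)" using Q.simps(3) by metis
  moreover have "b (3*k+3) = 2*k+2" unfolding b_def by simp
  ultimately show ?thesis unfolding q_def by (simp add: algebra_simps)
qed
lemma r3: "q k 4 = q k 3 + q k 2"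
proof -
  have "3*k+4 = Suc (Suc (3*k+2))" "3*k+3 = Suc (3*k+2)" by simp_all
  then have "Q (3*k+4) = b (3*k+4) * Q (3*k+3) + Q (3*k+2)" using Q.simps(3) by metis
  moreover have "b (3*k+4) = 1" unfolding b_def by presburger
  ultimately show ?thesis unfolding q_def by simp
qed
lemma s3: "q k 3 = q (k+1) 0" and s4: "q k 4 = q (k+1) 1" unfolding q_def by (simp_all add: algebra_simps)

definition E :: "nat \<Rightarrow> nat \<Rightarrow> nat \<Rightarrow> bool" where
  "E M i j \<longleftrightarrow> int M dvd int i - int j \<and> int M dvd q i 0 - q j 0 \<and> int M dvd q i 1 - q j 1"

lemma E2: assumes "E M i j" shows "int M dvd q i 2 - q j 2"
proof -
  have "q i 2 - q j 2 = (q i 1 - q j 1) + (q i 0 - q j 0)" using r1[of i] r1[of j] by linarith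
  then show ?thesis using assms unfolding E_def by (metis dvd_add)
qed

lemma Efwd: assumes "E M i j" shows "E M (i+1) (j+1)"
proof -
  note C = E2[OF assms]
  have a: "int M dvd int (i+1) - int (j+1)" using assms unfolding E_def by simp
  have eq: "q i 3 - q j 3 = 2*(int i+1)*(q i 2 - q j 2) + 2*(int i - int j)*q j 2 + (q i 1 - q j 1)"
    using r2[of i] r2[of j] by (simp add: algebra_simps)
  have "int M dvd 2*(int i+1)*(q i 2 - q j 2) + 2*(int i - int j)*q j 2 + (q i 1 - q j 1)"
    using C assms unfolding E_def
    by (metis dvd_add dvd_mult dvd_mult2)
  then have d: "int M dvd q i 3 - q j 3" using eq by simp
  have "q i 4 - q j 4 = (q i 3 - q j 3) + (q i 2 - q j 2)" using r3[of i] r3[of j] by linarith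
  then have e: "int M dvd q i 4 - q j 4" using C d by (metis dvd_add)
  show ?thesis unfolding E_def using a d e by (simp add: s3 s4)
qed

lemma Ebwd: assumes "E M (i+1) (j+1)" shows "E M i j"
proof -
  have a: "int M dvd int i - int j" using assms unfolding E_def by simp
  have A: "int M dvd q i 3 - q j 3" and B: "int M dvd q i 4 - q j 4"
    using assms unfolding E_def by (simp_all add: s3 s4)
  have "q i 2 - q j 2 = (q i 4 - q j 4) - (q i 3 - q j 3)" using r3[of i] r3[of j] by linarith
  then have C: "int M dvd q i 2 - q j 2" using A B by (metis dvd_diff)
  have eq: "q i 1 - q j 1 = (q i 3 - q j 3) - 2*(int i+1)*(q i 2 - q j 2) - 2*(int i - int j)*q j 2"
    using r2[of i] r2[of j] by (simp add: algebra_simps)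
  have "int M dvd (q i 3 - q j 3) - 2*(int i+1)*(q i 2 - q j 2) - 2*(int i - int j)*q j 2"
    using A C a by (metis dvd_diff dvd_mult dvd_mult2)
  then have D: "int M dvd q i 1 - q j 1" using eq by simp
  have "q i 0 - q j 0 = (q i 2 - q j 2) - (q i 1 - q j 1)" using r1[of i] r1[of j] by linarith
  then have "int M dvd q i 0 - q j 0" using C D by (metis dvd_diff)
  then show ?thesis unfolding E_def using a D by simp
qed

lemma Edown: "E M (i+k) (j+k) \<Longrightarrow> E M i j"
proof (induction k)
  case (Suc k)
  then show ?case using Ebwd[of M "i+k" "j+k"] by simp
qed simp

lemma Eup: "E M 0 p \<Longrightarrow> E M k (k+p)"
  by (induction k) (auto dest: Efwd)

lemma modeq_dvd: "(x::nat) mod M = y mod M \<Longrightarrow> int M dvd int x - int y"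
  by (metis mod_eq_dvd_iff of_nat_mod)

theorem propositionA6:
  fixes M :: nat
  assumes "M > 0"
  shows "\<exists>p. 0 < p \<and> p \<le> 3 * M ^ 3 \<and> (\<forall>n. Q (n + p) mod M = Q n mod M)"
proof -
  define f where "f k = (k mod M, Q (3*k+0) mod M, Q (3*k+1) mod M)" for k
  have sub: "f ` {0..M^3} \<subseteq> {..<M} \<times> {..<M} \<times> {..<M}"
    using assms unfolding f_def by auto
  have "card (f ` {0..M^3}) \<le> card ({..<M} \<times> {..<M} \<times> {..<M})"
    by (rule card_mono[OF _ sub]) auto
  also have "\<dots> = M^3" by (simp add: card_cartesian_product power3_eq_cube)
  finally have "card (f ` {0..M^3}) < card {0..M^3}" by simp
  then have "\<not> inj_on f {0..M^3}" using pigeonhole by blast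
  then obtain x y where xy: "x \<le> M^3" "y \<le> M^3" "x \<noteq> y" "f x = f y"
    unfolding inj_on_def by auto
  obtain i j where ij: "i < j" "j \<le> M^3" "f i = f j"
    using xy by (metis linorder_neqE_nat)
  have "E M i j" using ij(3) unfolding f_def E_def q_def by (auto intro: modeq_dvd)
  then have "E M (0 + i) ((j - i) + i)" using ij by simp
  then have E0: "E M 0 (j-i)" by (rule Edown)
  define p where "p = j - i"
  have p: "0 < p" "p \<le> M^3" using ij unfolding p_def by auto
  have all: "E M k (k+p)" for k using Eup E0 unfolding p_def by blast
  have "Q (n + 3*p) mod M = Q n mod M" for n
  proof -
    obtain k r where n: "n = 3*k + r" "r < 3" by (metis div_mod_decomp mod_less_divisor zero_less_numeral mult.commute)
    have "int M dvd q k r - q (k+p) r"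
      using all[of k] E2[OF all[of k]] n(2) unfolding E_def
      by (cases "r = 0"; cases "r = 1") (auto simp del: of_nat_add, metis One_nat_def less_2_cases numeral_3_eq_3 less_Suc_eq numeral_2_eq_2 Suc_1)
    moreover have "3*(k+p)+r = n + 3*p" using n by simp
    ultimately have "int M dvd int (Q n) - int (Q (n+3*p))" using n unfolding q_def by metis
    then show ?thesis by (metis mod_eq_dvd_iff of_nat_eq_iff of_nat_mod)
  qed
  then show ?thesis using p by (intro exI[of _ "3*p"]) auto
qed
end
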